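(* Let $F$ be a posheaf on a locale $X$. The following are equivalent: (1) $F$ is complete. (2) For every downsheaf $S$ of $F$, $\bigvee S$ exists and extends to a global point $p\in F(1_X)$ (i.e. $p|_{\mathrm{dom}(\bigvee S)}=\bigvee S$) such that for each $u\in\mathcal{O}(X)$, $p|_u$ is the least element $z$ of $F(u)$ satisfying $S^u\subseteq\downarrow z$. (3) For every subsheaf $S$ of $F$, $\bigvee S$ exists and extends to a global point $p\in F(1_X)$ such that for each $u\in\mathcal{O}(X)$, $p|_u$ is the least element $z$ of $F(u)$ satisfying $S^u\subseteq\downarrow z$. (4) Every $F(u)$ is a complete lattice, and for all $v\le u$ the restriction map $F(u)\to F(v)$ is surjective and has both a left adjoint and a right adjoint.
   Context: Let $X$ be a locale with frame of opens $\mathcal{O}(X)$ and top element $1_X$. A posheaf on $X$ is a sheaf of sets $F$ with (POS1) each $F(u)$ a poset; (POS2) restriction maps $F(u)\to F(v)$, $x\mapsto x|_v$ ($v\le u$), order-preserving; (POS3) if $u=\bigvee_i u_i$ and $s,t\in F(u)$ satisfy $s|_{u_i}\le t|_{u_i}$ for all $i$, then $s\le t$. A point of $F$ is a morphism $p:\hat1\to F$ with $\hat1$ a subsheaf of the terminal sheaf; $\mathrm{dom}(p)$ is the largest open $u$ with $\hat1(u)\neq\emptyset$; a point is identified with an element of $F(\mathrm{dom}(p))$; a global point is one with domain $1_X$. Points are ordered by $p_1\le p_2$ iff $\mathrm{dom}(p_1)\le\mathrm{dom}(p_2)$ and $p_1\le p_2|_{\mathrm{dom}(p_1)}$. For a subsheaf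 $A$ of $F$, a point $x$ is an upper bound of $A$ if $y\le x$ for all points $y$ of $A$, and $\bigvee A$ is the least upper bound. For $u\in\mathcal{O}(X)$, $F^u$ is the restriction of $F$ to $\downarrow u$ (regarded also as a subsheaf of $F$), and for a subsheaf $S$, $S^u$ is its restriction to $\downarrow u$. A downsheaf of $F$ is a subsheaf $G$ with each $G(v)$ a down-set of $F(v)$. For $z\in F(u)$, $\downarrow z$ is the downsheaf of $F^u$ with $(\downarrow z)(v)=\{y\in F(v)\mid y\le z|_v\}$ for $v\le u$. $\mathbb{D}F$ is the sheaf with $\mathbb{D}F(u)$ = the set of downsheaves of $F^u$, restriction $S\mapsto S^v$, ordered by inclusion, and $\downarrow:F\to\mathbb{D}F$, $z\mapsto\downarrow z$ is the principal ideal embedding. For order-preserving morphisms of posheaves $\alpha:F\to G$, $\beta:G\to F$, $\alpha\dashv\beta$ means $\alpha x\le y\iff x\le\beta y$ for all points $x$ of $F$, $y$ of $G$. $F$ is complete if the principal ideal embedding $\downarrow:F\to\mathbb{D}F$ has a left adjoint. *)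

theory Defs
  imports Main
begin

text \<open>
  The frame of opens of the locale X is a type 'o of class complete_lattice
  satisfying the frame distributive law.  A sheaf of sets F is given by its sets of
  sections F u (elements of a common type 'a) and restriction maps res u v : F u -> F v
  (meaningful for v <= u).  A point of F with domain u is identified with a pair (u, x), x in F u.
\<close>

definition frame_law :: "'o::complete_lattice itself \<Rightarrow> bool" where
  "frame_law _ \<longleftrightarrow> (\<forall>(a::'o) B. inf a (Sup B) = (SUP b\<in>B. inf a b))"

definition presheaf :: "('o::complete_lattice \<Rightarrow> 'a set) \<Rightarrow> ('o \<Rightarrow> 'o \<Rightarrow> 'a \<Rightarrow> 'a) \<Rightarrow> bool" where
  "presheaf F res \<longleftrightarrow>
     (\<forall>u v x. v \<le> u \<longrightarrow> x \<in> F u \<longrightarrow> res u v x \<in> F v) \<and>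
     (\<forall>u x. x \<in> F u \<longrightarrow> res u u x = x) \<and>
     (\<forall>u v w x. w \<le> v \<longrightarrow> v \<le> u \<longrightarrow> x \<in> F u \<longrightarrow> res v w (res u v x) = res u w x)"

definition compatible :: "('o::complete_lattice \<Rightarrow> 'a set) \<Rightarrow> ('o \<Rightarrow> 'o \<Rightarrow> 'a \<Rightarrow> 'a) \<Rightarrow> 'o set \<Rightarrow> ('o \<Rightarrow> 'a) \<Rightarrow> bool" where
  "compatible F res U s \<longleftrightarrow>
     (\<forall>w\<in>U. s w \<in> F w) \<and>
     (\<forall>w1\<in>U. \<forall>w2\<in>U. res w1 (inf w1 w2) (s w1) = res w2 (inf w1 w2) (s w2))"

definition sheaf :: "('o::complete_lattice \<Rightarrow> 'a set) \<Rightarrow> ('o \<Rightarrow> 'o \<Rightarrow> 'a \<Rightarrow> 'a) \<Rightarrow> bool" where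
  "sheaf F res \<longleftrightarrow> presheaf F res \<and>
     (\<forall>U s. compatible F res U s \<longrightarrow>
        (\<exists>!x. x \<in> F (Sup U) \<and> (\<forall>w\<in>U. res (Sup U) w x = s w)))"

definition partial_order_on_set :: "'a set \<Rightarrow> ('a \<Rightarrow> 'a \<Rightarrow> bool) \<Rightarrow> bool" where
  "partial_order_on_set A r \<longleftrightarrow>
     (\<forall>x\<in>A. r x x) \<and>
     (\<forall>x\<in>A. \<forall>y\<in>A. \<forall>z\<in>A. r x y \<longrightarrow> r y z \<longrightarrow> r x z) \<and>
     (\<forall>x\<in>A. \<forall>y\<in>A. r x y \<longrightarrow> r y x \<longrightarrow> x = y)"

definition posheaf :: "('o::complete_lattice \<Rightarrow> 'a set) \<Rightarrow> ('o \<Rightarrow> 'o \<Rightarrow> 'a \<Rightarrow> 'a)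
    \<Rightarrow> ('o \<Rightarrow> 'a \<Rightarrow> 'a \<Rightarrow> bool) \<Rightarrow> bool" where
  "posheaf F res le \<longleftrightarrow> sheaf F res \<and>
     (\<forall>u. partial_order_on_set (F u) (le u)) \<and>
     (\<forall>u v x y. v \<le> u \<longrightarrow> x \<in> F u \<longrightarrow> y \<in> F u \<longrightarrow> le u x y \<longrightarrow>
        le v (res u v x) (res u v y)) \<and>
     (\<forall>U x y. x \<in> F (Sup U) \<longrightarrow> y \<in> F (Sup U) \<longrightarrow>
        (\<forall>w\<in>U. le w (res (Sup U) w x) (res (Sup U) w y)) \<longrightarrow> le (Sup U) x y)"

definition subsheaf :: "('o::complete_lattice \<Rightarrow> 'a set) \<Rightarrow> ('o \<Rightarrow> 'o \<Rightarrow> 'a \<Rightarrow> 'a) \<Rightarrow> ('o \<Rightarrow> 'a set) \<Rightarrow> bool" where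
  "subsheaf F res S \<longleftrightarrow>
     (\<forall>u. S u \<subseteq> F u) \<and>
     (\<forall>u v x. v \<le> u \<longrightarrow> x \<in> S u \<longrightarrow> res u v x \<in> S v) \<and>
     (\<forall>U x. x \<in> F (Sup U) \<longrightarrow> (\<forall>w\<in>U. res (Sup U) w x \<in> S w) \<longrightarrow> x \<in> S (Sup U))"

definition downsheaf :: "('o::complete_lattice \<Rightarrow> 'a set) \<Rightarrow> ('o \<Rightarrow> 'o \<Rightarrow> 'a \<Rightarrow> 'a)
    \<Rightarrow> ('o \<Rightarrow> 'a \<Rightarrow> 'a \<Rightarrow> bool) \<Rightarrow> ('o \<Rightarrow> 'a set) \<Rightarrow> bool" where
  "downsheaf F res le S \<longleftrightarrow> subsheaf F res S \<and>
     (\<forall>v x y. x \<in> S v \<longrightarrow> y \<in> F v \<longrightarrow> le v y x \<longrightarrow> y \<in> S v)"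

definition pt_le :: "('o::complete_lattice \<Rightarrow> 'o \<Rightarrow> 'a \<Rightarrow> 'a) \<Rightarrow> ('o \<Rightarrow> 'a \<Rightarrow> 'a \<Rightarrow> bool)
    \<Rightarrow> 'o \<times> 'a \<Rightarrow> 'o \<times> 'a \<Rightarrow> bool" where
  "pt_le res le p q \<longleftrightarrow> fst p \<le> fst q \<and> le (fst p) (snd p) (res (fst q) (fst p) (snd q))"

definition is_join :: "('o::complete_lattice \<Rightarrow> 'a set) \<Rightarrow> ('o \<Rightarrow> 'o \<Rightarrow> 'a \<Rightarrow> 'a)
    \<Rightarrow> ('o \<Rightarrow> 'a \<Rightarrow> 'a \<Rightarrow> bool) \<Rightarrow> ('o \<Rightarrow> 'a set) \<Rightarrow> 'o \<times> 'a \<Rightarrow> bool" where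
  "is_join F res le A p \<longleftrightarrow>
     snd p \<in> F (fst p) \<and>
     (\<forall>v y. y \<in> A v \<longrightarrow> pt_le res le (v, y) p) \<and>
     (\<forall>u x. x \<in> F u \<longrightarrow> (\<forall>v y. y \<in> A v \<longrightarrow> pt_le res le (v, y) (u, x)) \<longrightarrow>
        pt_le res le p (u, x))"

definition below_principal :: "('o::complete_lattice \<Rightarrow> 'o \<Rightarrow> 'a \<Rightarrow> 'a) \<Rightarrow> ('o \<Rightarrow> 'a \<Rightarrow> 'a \<Rightarrow> bool)
    \<Rightarrow> ('o \<Rightarrow> 'a set) \<Rightarrow> 'o \<Rightarrow> 'a \<Rightarrow> bool" where
  "below_principal res le S u z \<longleftrightarrow> (\<forall>v. v \<le> u \<longrightarrow> (\<forall>y\<in>S v. le v y (res u v z)))"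

definition least_bound :: "('o::complete_lattice \<Rightarrow> 'a set) \<Rightarrow> ('o \<Rightarrow> 'o \<Rightarrow> 'a \<Rightarrow> 'a)
    \<Rightarrow> ('o \<Rightarrow> 'a \<Rightarrow> 'a \<Rightarrow> bool) \<Rightarrow> ('o \<Rightarrow> 'a set) \<Rightarrow> 'o \<Rightarrow> 'a \<Rightarrow> bool" where
  "least_bound F res le S u z \<longleftrightarrow>
     z \<in> F u \<and> below_principal res le S u z \<and>
     (\<forall>z'\<in>F u. below_principal res le S u z' \<longrightarrow> le u z z')"

definition good_join :: "('o::complete_lattice \<Rightarrow> 'a set) \<Rightarrow> ('o \<Rightarrow> 'o \<Rightarrow> 'a \<Rightarrow> 'a)
    \<Rightarrow> ('o \<Rightarrow> 'a \<Rightarrow> 'a \<Rightarrow> bool) \<Rightarrow> ('o \<Rightarrow> 'a set) \<Rightarrow> bool" where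
  "good_join F res le S \<longleftrightarrow>
     (\<exists>d y. is_join F res le S (d, y) \<and>
        (\<exists>p\<in>F top. res top d p = y \<and> (\<forall>u. least_bound F res le S u (res top u p))))"

text \<open>D F (u): downsheaves of F^u, regarded as subsheaves of F (empty outside \<down>u).\<close>
definition DF :: "('o::complete_lattice \<Rightarrow> 'a set) \<Rightarrow> ('o \<Rightarrow> 'o \<Rightarrow> 'a \<Rightarrow> 'a)
    \<Rightarrow> ('o \<Rightarrow> 'a \<Rightarrow> 'a \<Rightarrow> bool) \<Rightarrow> 'o \<Rightarrow> ('o \<Rightarrow> 'a set) set" where
  "DF F res le u = {D. downsheaf F res le D \<and> (\<forall>v. \<not> v \<le> u \<longrightarrow> D v = {})}"

definition Dres :: "'o::complete_lattice \<Rightarrow> ('o \<Rightarrow> 'a set) \<Rightarrow> ('o \<Rightarrow> 'a set)" where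
  "Dres w D = (\<lambda>v. if v \<le> w then D v else {})"

definition principal :: "('o::complete_lattice \<Rightarrow> 'a set) \<Rightarrow> ('o \<Rightarrow> 'o \<Rightarrow> 'a \<Rightarrow> 'a)
    \<Rightarrow> ('o \<Rightarrow> 'a \<Rightarrow> 'a \<Rightarrow> bool) \<Rightarrow> 'o \<Rightarrow> 'a \<Rightarrow> ('o \<Rightarrow> 'a set)" where
  "principal F res le u z = (\<lambda>v. if v \<le> u then {y \<in> F v. le v y (res u v z)} else {})"

definition Dpt_le :: "'o::complete_lattice \<times> ('o \<Rightarrow> 'a set) \<Rightarrow> 'o \<times> ('o \<Rightarrow> 'a set) \<Rightarrow> bool" where
  "Dpt_le p q \<longleftrightarrow> fst p \<le> fst q \<and> snd p \<le> Dres (fst p) (snd q)"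

definition left_adjoint_to_principal :: "('o::complete_lattice \<Rightarrow> 'a set) \<Rightarrow> ('o \<Rightarrow> 'o \<Rightarrow> 'a \<Rightarrow> 'a)
    \<Rightarrow> ('o \<Rightarrow> 'a \<Rightarrow> 'a \<Rightarrow> bool) \<Rightarrow> ('o \<Rightarrow> ('o \<Rightarrow> 'a set) \<Rightarrow> 'a) \<Rightarrow> bool" where
  "left_adjoint_to_principal F res le \<alpha> \<longleftrightarrow>
     (\<forall>u D. D \<in> DF F res le u \<longrightarrow> \<alpha> u D \<in> F u) \<and>
     (\<forall>u v D. v \<le> u \<longrightarrow> D \<in> DF F res le u \<longrightarrow> res u v (\<alpha> u D) = \<alpha> v (Dres v D)) \<and>
     (\<forall>u D E. D \<in> DF F res le u \<longrightarrow> E \<in> DF F res le u \<longrightarrow> D \<le> E \<longrightarrow> le u (\<alpha> u D) (\<alpha> u E)) \<and>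
     (\<forall>u1 D u2 y. D \<in> DF F res le u1 \<longrightarrow> y \<in> F u2 \<longrightarrow>
        (pt_le res le (u1, \<alpha> u1 D) (u2, y) \<longleftrightarrow> Dpt_le (u1, D) (u2, principal F res le u2 y)))"

definition complete_posheaf :: "('o::complete_lattice \<Rightarrow> 'a set) \<Rightarrow> ('o \<Rightarrow> 'o \<Rightarrow> 'a \<Rightarrow> 'a)
    \<Rightarrow> ('o \<Rightarrow> 'a \<Rightarrow> 'a \<Rightarrow> bool) \<Rightarrow> bool" where
  "complete_posheaf F res le \<longleftrightarrow> (\<exists>\<alpha>. left_adjoint_to_principal F res le \<alpha>)"

definition is_lub_in :: "'a set \<Rightarrow> ('a \<Rightarrow> 'a \<Rightarrow> bool) \<Rightarrow> 'a set \<Rightarrow> 'a \<Rightarrow> bool" where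
  "is_lub_in A r B s \<longleftrightarrow> s \<in> A \<and> (\<forall>b\<in>B. r b s) \<and> (\<forall>s'\<in>A. (\<forall>b\<in>B. r b s') \<longrightarrow> r s s')"

definition is_glb_in :: "'a set \<Rightarrow> ('a \<Rightarrow> 'a \<Rightarrow> bool) \<Rightarrow> 'a set \<Rightarrow> 'a \<Rightarrow> bool" where
  "is_glb_in A r B s \<longleftrightarrow> s \<in> A \<and> (\<forall>b\<in>B. r s b) \<and> (\<forall>s'\<in>A. (\<forall>b\<in>B. r s' b) \<longrightarrow> r s' s)"

definition complete_lattice_on :: "'a set \<Rightarrow> ('a \<Rightarrow> 'a \<Rightarrow> bool) \<Rightarrow> bool" where
  "complete_lattice_on A r \<longleftrightarrow> partial_order_on_set A r \<and>
     (\<forall>B\<subseteq>A. (\<exists>s. is_lub_in A r B s) \<and> (\<exists>i. is_glb_in A r B i))"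

definition galois_adj :: "'a set \<Rightarrow> ('a \<Rightarrow> 'a \<Rightarrow> bool) \<Rightarrow> 'b set \<Rightarrow> ('b \<Rightarrow> 'b \<Rightarrow> bool)
    \<Rightarrow> ('a \<Rightarrow> 'b) \<Rightarrow> ('b \<Rightarrow> 'a) \<Rightarrow> bool" where
  "galois_adj A rA B rB l g \<longleftrightarrow>
     (\<forall>x\<in>A. l x \<in> B) \<and> (\<forall>y\<in>B. g y \<in> A) \<and>
     (\<forall>x\<in>A. \<forall>y\<in>B. rB (l x) y \<longleftrightarrow> rA x (g y))"

end

theory Submission
  imports Defs
begin
lemma glb_to_lub:
  assumes "\<forall>B \<subseteq> A. \<exists>i. is_glb_in A r B i"
  shows "\<forall>B\<subseteq>A. \<exists>s. is_lub_in A r B s"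
proof (intro allI impI)
  fix B assume BA: "B \<subseteq> A"
  have "{a\<in>A. \<forall>b\<in>B. r b a} \<subseteq> A" by blast
  then obtain i where i: "is_glb_in A r {a\<in>A. \<forall>b\<in>B. r b a} i" using assms by blast
  have "is_lub_in A r B i" using i BA unfolding is_glb_in_def is_lub_in_def by blast
  then show "\<exists>s. is_lub_in A r B s" by blast
qed

locale PS =
  fixes F :: "'o::complete_lattice \<Rightarrow> 'a set"
    and res :: "'o \<Rightarrow> 'o \<Rightarrow> 'a \<Rightarrow> 'a"
    and le :: "'o \<Rightarrow> 'a \<Rightarrow> 'a \<Rightarrow> bool"
  assumes pos: "posheaf F res le"
begin
lemma P1: "sheaf F res" and P2: "partial_order_on_set (F u) (le u)" and
  P3: "\<forall>u v x y. v \<le> u \<longrightarrow> x \<in> F u \<longrightarrow> y \<in> F u \<longrightarrow> le u x y \<longrightarrow>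
        le v (res u v x) (res u v y)" and
  P4: "\<forall>U x y. x \<in> F (Sup U) \<longrightarrow> y \<in> F (Sup U) \<longrightarrow>
        (\<forall>w\<in>U. le w (res (Sup U) w x) (res (Sup U) w y)) \<longrightarrow> le (Sup U) x y"
  using pos unfolding posheaf_def by auto
lemma P5: "presheaf F res" using P1 unfolding sheaf_def by auto
lemma res_in: "v \<le> u \<Longrightarrow> x \<in> F u \<Longrightarrow> res u v x \<in> F v"
  using P5 unfolding presheaf_def by blast
lemma res_id: "x \<in> F u \<Longrightarrow> res u u x = x"
  using P5 unfolding presheaf_def by blast
lemma res_comp: "w \<le> v \<Longrightarrow> v \<le> u \<Longrightarrow> x \<in> F u \<Longrightarrow> res v w (res u v x) = res u w x"
  using P5 unfolding presheaf_def by blast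
lemma prefl: "x \<in> F u \<Longrightarrow> le u x x"
  using P2 unfolding partial_order_on_set_def by blast
lemma ptrans: "x \<in> F u \<Longrightarrow> y \<in> F u \<Longrightarrow> z \<in> F u \<Longrightarrow> le u x y \<Longrightarrow> le u y z \<Longrightarrow> le u x z"
  using P2 unfolding partial_order_on_set_def by blast
lemma pantisym: "x \<in> F u \<Longrightarrow> y \<in> F u \<Longrightarrow> le u x y \<Longrightarrow> le u y x \<Longrightarrow> x = y"
  using P2 unfolding partial_order_on_set_def by blast
lemma pmono: "v \<le> u \<Longrightarrow> x \<in> F u \<Longrightarrow> y \<in> F u \<Longrightarrow> le u x y \<Longrightarrow> le v (res u v x) (res u v y)"
  using P3 by blast
lemma pos3: "x \<in> F (Sup U) \<Longrightarrow> y \<in> F (Sup U) \<Longrightarrow>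
   (\<And>w. w\<in>U \<Longrightarrow> le w (res (Sup U) w x) (res (Sup U) w y)) \<Longrightarrow> le (Sup U) x y"
  using P4 by blast
lemma glue: "compatible F res U s \<Longrightarrow> \<exists>x. x \<in> F (Sup U) \<and> (\<forall>w\<in>U. res (Sup U) w x = s w)"
  using P1 unfolding sheaf_def by blast
lemma lb_unique: "least_bound F res le S u z1 \<Longrightarrow> least_bound F res le S u z2 \<Longrightarrow> z1 = z2"
  unfolding least_bound_def using pantisym by blast

definition lbnd where "lbnd S u = (SOME z. least_bound F res le S u z)"

lemma lbnd_eq: "least_bound F res le S u z \<Longrightarrow> lbnd S u = z"
  unfolding lbnd_def by (metis someI lb_unique)

lemma gj_unpack: "good_join F res le S \<Longrightarrow> \<exists>p\<in>F top. \<forall>u. least_bound F res le S u (res top u p)"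
  unfolding good_join_def by blast

lemma lb_Dres: "least_bound F res le (Dres v D) v z \<longleftrightarrow> least_bound F res le D v z"
  unfolding least_bound_def below_principal_def Dres_def by auto

lemma lb_iff:
  assumes SF: "\<forall>v. S v \<subseteq> F v" and lb: "least_bound F res le S u z" and z': "z' \<in> F u"
  shows "le u z z' \<longleftrightarrow> below_principal res le S u z'"
proof
  assume h: "le u z z'"
  show "below_principal res le S u z'" unfolding below_principal_def
  proof (intro allI impI ballI)
    fix v x assume vu: "v \<le> u" and x: "x \<in> S v"
    have zF: "z \<in> F u" using lb unfolding least_bound_def by blast
    have 1: "le v x (res u v z)" using lb vu x unfolding least_bound_def below_principal_def by blast
    have 2: "le v (res u v z) (res u v z')" using pmono[OF vu zF z' h] .
    have xF: "x \<in> F v" using SF x by blast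
    show "le v x (res u v z')" using ptrans[OF xF res_in[OF vu zF] res_in[OF vu z'] 1 2] .
  qed
next
  assume "below_principal res le S u z'"
  then show "le u z z'" using lb z' unfolding least_bound_def by blast
qed

lemma GJ:
  assumes SF: "\<forall>v. S v \<subseteq> F v" and pF: "p \<in> F top"
    and lb: "\<forall>u. least_bound F res le S u (res top u p)"
  shows "good_join F res le S"
proof -
  define d where "d = Sup {v. S v \<noteq> {}}"
  have dF: "res top d p \<in> F d" using res_in pF by simp
  have up: "pt_le res le (v, y) (d, res top d p)" if "y \<in> S v" for v y
  proof -
    have vd: "v \<le> d" using that unfolding d_def by (auto intro: Sup_upper)
    have lbv: "least_bound F res le S v (res top v p)" using lb by blast
    have "le v y (res v v (res top v p))" using lbv that unfolding least_bound_def below_principal_def by blast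
    moreover have "res v v (res top v p) = res top v p" using res_id res_in pF by simp
    moreover have "res d v (res top d p) = res top v p" using res_comp vd pF by simp
    ultimately show ?thesis unfolding pt_le_def using vd by simp
  qed
  have least: "pt_le res le (d, res top d p) (u, x)"
    if x: "x \<in> F u" and ub: "\<forall>v y. y \<in> S v \<longrightarrow> pt_le res le (v, y) (u, x)" for u x
  proof -
    have du: "d \<le> u" unfolding d_def
    proof (rule Sup_least)
      fix v assume "v \<in> {v. S v \<noteq> {}}"
      then obtain y where "y \<in> S v" by blast
      then show "v \<le> u" using ub unfolding pt_le_def by auto
    qed
    have bp: "below_principal res le S d (res u d x)" unfolding below_principal_def
    proof (intro allI impI ballI)
      fix v y assume "v \<le> d" "y \<in> S v"
      then have "le v y (res u v x)" using ub unfolding pt_le_def by auto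
      moreover have "res d v (res u d x) = res u v x" using res_comp \<open>v \<le> d\<close> du x by simp
      ultimately show "le v y (res d v (res u d x))" by simp
    qed
    have "le d (res top d p) (res u d x)" using lb bp res_in[OF du x] unfolding least_bound_def by blast
    then show ?thesis unfolding pt_le_def using du by simp
  qed
  have "is_join F res le S (d, res top d p)" unfolding is_join_def using dF up least by auto
  then show ?thesis unfolding good_join_def using pF lb by blast
qed
lemma c4_c3:
  assumes cl: "\<forall>u. complete_lattice_on (F u) (le u)"
  and adj: "\<forall>u v. v \<le> u \<longrightarrow> res u v ` F u = F v \<and>
                 (\<exists>l. galois_adj (F v) (le v) (F u) (le u) l (res u v)) \<and>
                 (\<exists>g. galois_adj (F u) (le u) (F v) (le v) (res u v) g)"
  and S: "subsheaf F res S"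
  shows "good_join F res le S"
proof -
  define L where "L u v = (SOME l. galois_adj (F v) (le v) (F u) (le u) l (res u v))" for u v
  define G where "G u v = (SOME g. galois_adj (F u) (le u) (F v) (le v) (res u v) g)" for u v
  have Lg: "galois_adj (F v) (le v) (F u) (le u) (L u v) (res u v)" if "v \<le> u" for u v
  proof -
    have "\<exists>l. galois_adj (F v) (le v) (F u) (le u) l (res u v)" using adj that by blast
    then show ?thesis unfolding L_def by (rule someI_ex)
  qed
  have Gg: "galois_adj (F u) (le u) (F v) (le v) (res u v) (G u v)" if "v \<le> u" for u v
  proof -
    have "\<exists>g. galois_adj (F u) (le u) (F v) (le v) (res u v) g" using adj that by blast
    then show ?thesis unfolding G_def by (rule someI_ex)
  qed
  have surj: "res u v ` F u = F v" if "v \<le> u" for u v using adj that by blast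
  have L_in: "L u v y \<in> F u" if "v \<le> u" "y \<in> F v" for u v y
    using Lg[OF that(1)] that(2) unfolding galois_adj_def by blast
  have L_iff: "le u (L u v y) x \<longleftrightarrow> le v y (res u v x)" if "v \<le> u" "y \<in> F v" "x \<in> F u" for u v y x
    using Lg[OF that(1)] that(2,3) unfolding galois_adj_def by blast
  have G_in: "G u v y \<in> F u" if "v \<le> u" "y \<in> F v" for u v y
    using Gg[OF that(1)] that(2) unfolding galois_adj_def by blast
  have G_iff: "le v (res u v x) y \<longleftrightarrow> le u x (G u v y)" if "v \<le> u" "x \<in> F u" "y \<in> F v" for u v y x
    using Gg[OF that(1)] that(2,3) unfolding galois_adj_def by blast
  have rl: "res u v (L u v y) = y" if vu: "v \<le> u" and y: "y \<in> F v" for u v y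
  proof -
    obtain x where x: "x \<in> F u" "y = res u v x" using surj[OF vu] y by blast
    have 1: "le u (L u v y) x" using L_iff[OF vu y x(1)] prefl y x by simp
    have "le v (res u v (L u v y)) y" using pmono[OF vu L_in[OF vu y] x(1) 1] x by simp
    moreover have "le v y (res u v (L u v y))" using L_iff[OF vu y L_in[OF vu y]] prefl L_in[OF vu y] by simp
    ultimately show ?thesis using pantisym res_in[OF vu L_in[OF vu y]] y by blast
  qed
  have Ssub: "\<forall>v. S v \<subseteq> F v" using S unfolding subsheaf_def by blast
  have Sres: "res u v x \<in> S v" if "v \<le> u" "x \<in> S u" for u v x
    using S that unfolding subsheaf_def by blast
  define B where "B = {L top v y | v y. y \<in> S v}"
  have BF: "B \<subseteq> F top" using L_in Ssub unfolding B_def by fastforce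
  obtain p where p: "is_lub_in (F top) (le top) B p" using cl BF unfolding complete_lattice_on_def by blast
  have pF: "p \<in> F top" and pub: "\<And>b. b \<in> B \<Longrightarrow> le top b p"
    and pl: "\<And>s. s \<in> F top \<Longrightarrow> (\<forall>b\<in>B. le top b s) \<Longrightarrow> le top p s"
    using p unfolding is_lub_in_def by auto
  have key: "least_bound F res le S u (res top u p)" for u
  proof -
    have bp: "below_principal res le S u (res top u p)" unfolding below_principal_def
    proof (intro allI impI ballI)
      fix v y assume vu: "v \<le> u" and y: "y \<in> S v"
      have yF: "y \<in> F v" using y Ssub by blast
      have "le top (L top v y) p" using pub y unfolding B_def by blast
      then have "le v y (res top v p)" using L_iff[OF top_greatest yF pF] by simp
      then show "le v y (res u v (res top u p))" using res_comp[OF vu top_greatest pF] by simp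
    qed
    have lst: "le u (res top u p) z'" if z': "z' \<in> F u" and bz: "below_principal res le S u z'" for z'
    proof -
      have "le top b (G top u z')" if "b \<in> B" for b
      proof -
        obtain v y where b: "b = L top v y" and y: "y \<in> S v" using \<open>b\<in>B\<close> unfolding B_def by blast
        have yF: "y \<in> F v" using y Ssub by blast
        define w where "w = inf u v"
        have wu: "w \<le> u" and wv: "w \<le> v" unfolding w_def by auto
        define yw where "yw = res v w y"
        have ywS: "yw \<in> S w" using Sres wv y unfolding yw_def by blast
        have ywF: "yw \<in> F w" using ywS Ssub by blast
        define s where "s t = (if t = v then y else L u w yw)" for t
        have sv: "s v = y" unfolding s_def by simp
        have su_F: "s u \<in> F u" using yF L_in[OF wu ywF] unfolding s_def by auto
        have su_res: "res u w (s u) = yw"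
        proof (cases "u = v")
          case True then show ?thesis unfolding s_def yw_def by simp
        next
          case False then show ?thesis unfolding s_def using rl[OF wu ywF] by simp
        qed
        have su_le: "le u (s u) z'"
        proof (cases "u = v")
          case True
          have "le u y (res u u z')" using bz y True unfolding below_principal_def by blast
          then show ?thesis using True res_id[OF z'] unfolding s_def by simp
        next
          case False
          have "le w yw (res u w z')" using bz ywS wu unfolding below_principal_def by blast
          then show ?thesis using False L_iff[OF wu ywF z'] unfolding s_def by simp
        qed
        have iuv: "inf u v = w" "inf v u = w" unfolding w_def by (auto simp: inf_commute)
        have comp: "compatible F res {u, v} s" unfolding compatible_def
          using su_F su_res sv yF iuv unfolding yw_def by auto
        obtain x where xF: "x \<in> F (Sup {u,v})" and xr: "\<forall>t\<in>{u,v}. res (Sup {u,v}) t x = s t"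
          using glue[OF comp] by blast
        define m where "m = Sup {u,v}"
        have um: "u \<le> m" "v \<le> m" by (auto simp: m_def intro: Sup_upper)
        define x' where "x' = L top m x"
        have xFm: "x \<in> F m" using xF m_def by simp
        have x'F: "x' \<in> F top" using L_in[OF top_greatest xFm] x'_def by simp
        have x'r: "res top m x' = x" using rl[OF top_greatest xFm] x'_def by simp
        have "res top v x' = y" using res_comp[OF um(2) top_greatest x'F] x'r xr sv m_def by auto
        then have "le v y (res top v x')" using prefl yF by simp
        then have 1: "le top (L top v y) x'" using L_iff[OF top_greatest yF x'F] by simp
        have LF: "L top v y \<in> F top" using L_in[OF top_greatest yF] .
        have 2: "le u (res top u (L top v y)) (res top u x')" using pmono[OF top_greatest LF x'F 1] .
        have "res top u x' = s u" using res_comp[OF um(1) top_greatest x'F] x'r xr m_def by auto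
        then have "le u (res top u (L top v y)) z'"
          using ptrans[OF res_in[OF top_greatest LF] res_in[OF top_greatest x'F] z' 2] su_le by simp
        then show ?thesis using G_iff[OF top_greatest LF z'] b by simp
      qed
      then have "le top p (G top u z')" using pl G_in[OF top_greatest z'] by blast
      then show ?thesis using G_iff[OF top_greatest pF z'] by simp
    qed
    show ?thesis unfolding least_bound_def using bp lst res_in[OF top_greatest pF] by auto
  qed
  show ?thesis using GJ[OF Ssub pF] key by blast
qed
definition Dg where "Dg u B = (\<lambda>v. if v \<le> u then {y \<in> F v. \<forall>b\<in>B. le v y (res u v b)} else {})"

lemma Dg_down:
  assumes B: "B \<subseteq> F u"
  shows "downsheaf F res le (Dg u B)"
proof -
  have 1: "\<forall>v. Dg u B v \<subseteq> F v" by (auto simp: Dg_def)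
  have 2: "res v w x \<in> Dg u B w" if wv: "w \<le> v" and x: "x \<in> Dg u B v" for v w x
  proof -
    from x have vu: "v \<le> u" and xF: "x \<in> F v" and xb: "\<forall>b\<in>B. le v x (res u v b)"
      by (auto simp: Dg_def split: if_splits)
    have "le w (res v w x) (res u w b)" if b: "b \<in> B" for b
    proof -
      have bF: "b \<in> F u" using B b by blast
      have "le w (res v w x) (res v w (res u v b))" using pmono[OF wv xF res_in[OF vu bF]] xb b by auto
      then show ?thesis using res_comp[OF wv vu bF] by simp
    qed
    then show ?thesis using wv vu res_in[OF wv xF] by (auto simp: Dg_def)
  qed
  have 3: "x \<in> Dg u B (Sup U)" if xF: "x \<in> F (Sup U)" and h: "\<forall>w\<in>U. res (Sup U) w x \<in> Dg u B w" for U x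
  proof -
    have Uu: "Sup U \<le> u"
    proof (rule Sup_least)
      fix w assume "w \<in> U" then show "w \<le> u" using h by (auto simp: Dg_def split: if_splits)
    qed
    have "le (Sup U) x (res u (Sup U) b)" if b: "b \<in> B" for b
    proof -
      have bF: "b \<in> F u" using B b by blast
      show ?thesis
      proof (rule pos3[OF xF res_in[OF Uu bF]])
        fix w assume w: "w \<in> U"
        have wU: "w \<le> Sup U" using w by (rule Sup_upper)
        have "le w (res (Sup U) w x) (res u w b)" using h w b by (auto simp: Dg_def split: if_splits)
        then show "le w (res (Sup U) w x) (res (Sup U) w (res u (Sup U) b))" using res_comp[OF wU Uu bF] by simp
      qed
    qed
    then show ?thesis using Uu xF by (auto simp: Dg_def)
  qed
  have 4: "y \<in> Dg u B v" if x: "x \<in> Dg u B v" and yF: "y \<in> F v" and yx: "le v y x" for v x y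
  proof -
    from x have vu: "v \<le> u" and xF: "x \<in> F v" and xb: "\<forall>b\<in>B. le v x (res u v b)"
      by (auto simp: Dg_def split: if_splits)
    have "le v y (res u v b)" if b: "b \<in> B" for b
      using ptrans[OF yF xF res_in[OF vu] yx] xb b B by blast
    then show ?thesis using vu yF by (auto simp: Dg_def)
  qed
  show ?thesis unfolding downsheaf_def subsheaf_def
    apply (intro conjI)
       apply (rule 1)
      apply (intro allI impI) apply (erule (1) 2)
     apply (intro allI impI) apply (erule 3) apply assumption
    apply (intro allI impI) apply (erule (2) 4)
    done
qed

lemma principal_Dg: "principal F res le u z = Dg u {z}"
  unfolding principal_def Dg_def by (auto simp: fun_eq_iff)

definition Dr where "Dr u v y = (\<lambda>w. if w \<le> u then {x \<in> F w. le (inf w v) (res w (inf w v) x) (res v (inf w v) y)} else {})"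

lemma Dr_down:
  assumes frame: "frame_law TYPE('o)" and vu: "v \<le> u" and y: "y \<in> F v"
  shows "downsheaf F res le (Dr u v y)"
proof -
  have 1: "\<forall>w. Dr u v y w \<subseteq> F w" by (auto simp: Dr_def)
  have 2: "res w w' x \<in> Dr u v y w'" if ww: "w' \<le> w" and x: "x \<in> Dr u v y w" for w w' x
  proof -
    from x have wu: "w \<le> u" and xF: "x \<in> F w" and xl: "le (inf w v) (res w (inf w v) x) (res v (inf w v) y)"
      by (auto simp: Dr_def split: if_splits)
    have i1: "inf w' v \<le> inf w v" using ww inf_mono by blast
    have i2: "inf w v \<le> w" "inf w v \<le> v" by auto
    have "le (inf w' v) (res (inf w v) (inf w' v) (res w (inf w v) x)) (res (inf w v) (inf w' v) (res v (inf w v) y))"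
      using pmono[OF i1 res_in[OF i2(1) xF] res_in[OF i2(2) y] xl] .
    moreover have "res (inf w v) (inf w' v) (res w (inf w v) x) = res w' (inf w' v) (res w w' x)"
      using res_comp[OF i1 i2(1) xF] res_comp[of "inf w' v" w' w x] ww xF by auto
    moreover have "res (inf w v) (inf w' v) (res v (inf w v) y) = res v (inf w' v) y"
      using res_comp[OF i1 i2(2) y] .
    ultimately show ?thesis using ww wu res_in[OF ww xF] by (auto simp: Dr_def)
  qed
  have 3: "x \<in> Dr u v y (Sup U)" if xF: "x \<in> F (Sup U)" and h: "\<forall>w\<in>U. res (Sup U) w x \<in> Dr u v y w" for U x
  proof -
    have Uu: "Sup U \<le> u"
    proof (rule Sup_least)
      fix w assume "w \<in> U" then show "w \<le> u" using h by (auto simp: Dr_def split: if_splits)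
    qed
    define U' where "U' = (\<lambda>w. inf w v) ` U"
    have SU': "Sup U' = inf (Sup U) v"
    proof -
      have "inf v (Sup U) = (SUP b\<in>U. inf v b)" using frame unfolding frame_law_def by blast
      moreover have "(\<lambda>b. inf v b) ` U = U'" unfolding U'_def by (auto simp: inf_commute)
      ultimately show ?thesis by (simp add: inf_commute)
    qed
    have mv: "inf (Sup U) v \<le> Sup U" "inf (Sup U) v \<le> v" by auto
    have a: "res (Sup U) (inf (Sup U) v) x \<in> F (Sup U')" using res_in[OF mv(1) xF] SU' by simp
    have b: "res v (inf (Sup U) v) y \<in> F (Sup U')" using res_in[OF mv(2) y] SU' by simp
    have "le (Sup U') (res (Sup U) (inf (Sup U) v) x) (res v (inf (Sup U) v) y)"
    proof (rule pos3[OF a b])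
      fix w' assume "w' \<in> U'"
      then obtain w where w: "w \<in> U" and w': "w' = inf w v" unfolding U'_def by blast
      have wU: "w \<le> Sup U" using w by (rule Sup_upper)
      have w'm: "w' \<le> inf (Sup U) v" using wU w' inf_mono by blast
      have w'w: "w' \<le> w" using w' by simp
      have hw: "le w' (res w w' (res (Sup U) w x)) (res v w' y)"
        using h w w' by (auto simp: Dr_def split: if_splits)
      have "res (Sup U') w' (res (Sup U) (inf (Sup U) v) x) = res w w' (res (Sup U) w x)"
        using SU' res_comp[OF w'm mv(1) xF] res_comp[OF w'w wU xF] by simp
      moreover have "res (Sup U') w' (res v (inf (Sup U) v) y) = res v w' y"
        using SU' res_comp[OF w'm mv(2) y] by simp
      ultimately show "le w' (res (Sup U') w' (res (Sup U) (inf (Sup U) v) x)) (res (Sup U') w' (res v (inf (Sup U) v) y))"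
        using hw by simp
    qed
    then show ?thesis using SU' Uu xF by (auto simp: Dr_def)
  qed
  have 4: "z \<in> Dr u v y w" if x: "x \<in> Dr u v y w" and zF: "z \<in> F w" and zx: "le w z x" for w x z
  proof -
    from x have wu: "w \<le> u" and xF: "x \<in> F w" and xl: "le (inf w v) (res w (inf w v) x) (res v (inf w v) y)"
      by (auto simp: Dr_def split: if_splits)
    have i2: "inf w v \<le> w" "inf w v \<le> v" by auto
    have "le (inf w v) (res w (inf w v) z) (res w (inf w v) x)" using pmono[OF i2(1) zF xF zx] .
    then have "le (inf w v) (res w (inf w v) z) (res v (inf w v) y)"
      using ptrans[OF res_in[OF i2(1) zF] res_in[OF i2(1) xF] res_in[OF i2(2) y]] xl by blast
    then show ?thesis using wu zF by (auto simp: Dr_def)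
  qed
  show ?thesis unfolding downsheaf_def subsheaf_def
    apply (intro conjI)
       apply (rule 1)
      apply (intro allI impI) apply (erule (1) 2)
     apply (intro allI impI) apply (erule 3) apply assumption
    apply (intro allI impI) apply (erule (2) 4)
    done
qed
lemma c2_c4:
  assumes frame: "frame_law TYPE('o)"
    and C2: "\<forall>S. downsheaf F res le S \<longrightarrow> good_join F res le S"
  shows "(\<forall>u. complete_lattice_on (F u) (le u)) \<and>
              (\<forall>u v. v \<le> u \<longrightarrow>
                 res u v ` F u = F v \<and>
                 (\<exists>l. galois_adj (F v) (le v) (F u) (le u) l (res u v)) \<and>
                 (\<exists>g. galois_adj (F u) (le u) (F v) (le v) (res u v) g))"
proof -
  have ex: "\<exists>p\<in>F top. \<forall>w. least_bound F res le S w (res top w p)" if "downsheaf F res le S" for S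
    using C2 that gj_unpack by blast
  have glb: "\<exists>i. is_glb_in (F u) (le u) B i" if B: "B \<subseteq> F u" for u B
  proof -
    obtain p where pF: "p \<in> F top" and lb: "\<forall>w. least_bound F res le (Dg u B) w (res top w p)"
      using ex[OF Dg_down[OF B]] by blast
    define z where "z = res top u p"
    have lbz: "least_bound F res le (Dg u B) u z" using lb z_def by blast
    have zF: "z \<in> F u" using lbz unfolding least_bound_def by blast
    have 1: "le u z b" if b: "b \<in> B" for b
    proof -
      have "below_principal res le (Dg u B) u b" unfolding below_principal_def Dg_def using b by auto
      then show ?thesis using lbz b B unfolding least_bound_def by blast
    qed
    have 2: "le u s z" if sF: "s \<in> F u" and sl: "\<forall>b\<in>B. le u s b" for s
    proof -
      have "s \<in> Dg u B u" unfolding Dg_def using sF sl B res_id by auto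
      then have "le u s (res u u z)" using lbz unfolding least_bound_def below_principal_def by blast
      then show ?thesis using res_id[OF zF] by simp
    qed
    show ?thesis unfolding is_glb_in_def using zF 1 2 by blast
  qed
  have cl: "complete_lattice_on (F u) (le u)" for u
    unfolding complete_lattice_on_def using P2 glb glb_to_lub[of "F u" "le u"] by blast
  have adj: "res u v ` F u = F v \<and>
                 (\<exists>l. galois_adj (F v) (le v) (F u) (le u) l (res u v)) \<and>
                 (\<exists>g. galois_adj (F u) (le u) (F v) (le v) (res u v) g)" if vu: "v \<le> u" for u v
  proof -
    have prin_lb: "least_bound F res le (principal F res le v y) v y" if y: "y \<in> F v" for y
    proof -
      have "below_principal res le (principal F res le v y) v y"
        unfolding below_principal_def principal_def by auto
      moreover have "le v y z'" if "z' \<in> F v" "below_principal res le (principal F res le v y) v z'" for z'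
      proof -
        have "y \<in> principal F res le v y v" unfolding principal_def using y prefl res_id by simp
        then have "le v y (res v v z')" using that unfolding below_principal_def by blast
        then show ?thesis using res_id that by simp
      qed
      ultimately show ?thesis unfolding least_bound_def using y by blast
    qed
    have pd: "downsheaf F res le (principal F res le v y)" if y: "y \<in> F v" for y
      unfolding principal_Dg using Dg_down y by blast
    have surj: "res u v ` F u = F v"
    proof
      show "res u v ` F u \<subseteq> F v" using res_in vu by blast
      show "F v \<subseteq> res u v ` F u"
      proof
        fix y assume y: "y \<in> F v"
        obtain p where pF: "p \<in> F top" and lb: "\<forall>w. least_bound F res le (principal F res le v y) w (res top w p)"
          using ex[OF pd[OF y]] by blast
        have "res top v p = y" using lb_unique lb prin_lb[OF y] by blast
        then have "res u v (res top u p) = y" using res_comp[OF vu top_greatest pF] by simp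
        then show "y \<in> res u v ` F u" using res_in[OF top_greatest pF] by blast
      qed
    qed
    define l where "l y = lbnd (principal F res le v y) u" for y
    have l_lb: "least_bound F res le (principal F res le v y) u (l y)" if y: "y \<in> F v" for y
    proof -
      obtain p where lb: "\<forall>w. least_bound F res le (principal F res le v y) w (res top w p)"
        using ex[OF pd[OF y]] by blast
      then show ?thesis unfolding l_def using lbnd_eq by metis
    qed
    have ladj: "galois_adj (F v) (le v) (F u) (le u) l (res u v)"
      unfolding galois_adj_def
    proof (intro conjI ballI)
      fix y assume y: "y \<in> F v"
      show "l y \<in> F u" using l_lb[OF y] unfolding least_bound_def by blast
    next
      fix x assume "x \<in> F u" then show "res u v x \<in> F v" using res_in vu by blast
    next
      fix y x assume y: "y \<in> F v" and x: "x \<in> F u"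
      have lF: "l y \<in> F u" using l_lb[OF y] unfolding least_bound_def by blast
      show "le u (l y) x \<longleftrightarrow> le v y (res u v x)"
      proof
        assume h: "le u (l y) x"
        have "y \<in> principal F res le v y v" unfolding principal_def using y prefl res_id by simp
        then have 1: "le v y (res u v (l y))" using l_lb[OF y] vu unfolding least_bound_def below_principal_def by blast
        have 2: "le v (res u v (l y)) (res u v x)" using pmono[OF vu lF x h] .
        show "le v y (res u v x)" using ptrans[OF y res_in[OF vu lF] res_in[OF vu x] 1 2] .
      next
        assume h: "le v y (res u v x)"
        have "below_principal res le (principal F res le v y) u x" unfolding below_principal_def
        proof (intro allI impI ballI)
          fix w y' assume wu: "w \<le> u" and y': "y' \<in> principal F res le v y w"
          then have wv: "w \<le> v" and y'F: "y' \<in> F w" and y'l: "le w y' (res v w y)"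
            unfolding principal_def by (auto split: if_splits)
          have "le w (res v w y) (res v w (res u v x))" using pmono[OF wv y res_in[OF vu x] h] .
          then have "le w y' (res v w (res u v x))"
            using ptrans[OF y'F res_in[OF wv y] res_in[OF wv res_in[OF vu x]] y'l] by blast
          then show "le w y' (res u w x)" using res_comp[OF wv vu x] by simp
        qed
        then show "le u (l y) x" using l_lb[OF y] x unfolding least_bound_def by blast
      qed
    qed
    define g where "g y = lbnd (Dr u v y) u" for y
    have g_props: "least_bound F res le (Dr u v y) u (g y) \<and> res u v (g y) = y" if y: "y \<in> F v" for y
    proof -
      obtain p where pF: "p \<in> F top" and lb: "\<forall>w. least_bound F res le (Dr u v y) w (res top w p)"
        using ex[OF Dr_down[OF frame vu y]] by blast
      have gy: "g y = res top u p" unfolding g_def using lbnd_eq lb by metis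
      have lbv: "least_bound F res le (Dr u v y) v y"
      proof -
        have "below_principal res le (Dr u v y) v y" unfolding below_principal_def Dr_def
        proof (intro allI impI ballI)
          fix w x assume wv: "w \<le> v" and "x \<in> (if w \<le> u then {x \<in> F w. le (inf w v) (res w (inf w v) x) (res v (inf w v) y)} else {})"
          then show "le w x (res v w y)" using wv by (auto simp: inf_absorb1 res_id split: if_splits)
        qed
        moreover have "le v y z'" if z': "z' \<in> F v" and bz: "below_principal res le (Dr u v y) v z'" for z'
        proof -
          have "y \<in> Dr u v y v" unfolding Dr_def using vu y prefl res_id by simp
          then have "le v y (res v v z')" using bz unfolding below_principal_def by blast
          then show ?thesis using res_id z' by simp
        qed
        ultimately show ?thesis unfolding least_bound_def using y by blast
      qed
      have "res top v p = y" using lb_unique lb lbv by blast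
      then show ?thesis using gy lb res_comp[OF vu top_greatest pF] by simp
    qed
    have radj: "galois_adj (F u) (le u) (F v) (le v) (res u v) g"
      unfolding galois_adj_def
    proof (intro conjI ballI)
      fix x assume "x \<in> F u" then show "res u v x \<in> F v" using res_in vu by blast
    next
      fix y assume y: "y \<in> F v"
      show "g y \<in> F u" using g_props[OF y] unfolding least_bound_def by blast
    next
      fix x y assume x: "x \<in> F u" and y: "y \<in> F v"
      have gF: "g y \<in> F u" using g_props[OF y] unfolding least_bound_def by blast
      show "le v (res u v x) y \<longleftrightarrow> le u x (g y)"
      proof
        assume h: "le v (res u v x) y"
        have "x \<in> Dr u v y u" unfolding Dr_def using x h vu res_id[OF y] by (simp add: inf_absorb2)
        then have "le u x (res u u (g y))" using g_props[OF y] unfolding least_bound_def below_principal_def by blast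
        then show "le u x (g y)" using res_id[OF gF] by simp
      next
        assume h: "le u x (g y)"
        show "le v (res u v x) y" using pmono[OF vu x gF h] g_props[OF y] by simp
      qed
    qed
    show ?thesis using surj ladj radj by blast
  qed
  show ?thesis using cl adj by blast
qed
lemma DF_sub: "D \<in> DF F res le u \<Longrightarrow> \<forall>v. D v \<subseteq> F v"
  unfolding DF_def downsheaf_def subsheaf_def by blast

lemma DF_principal:
  assumes D: "D \<in> DF F res le u1" and u12: "u1 \<le> u2" and y: "y \<in> F u2"
  shows "Dpt_le (u1, D) (u2, principal F res le u2 y) \<longleftrightarrow> below_principal res le D u1 (res u2 u1 y)"
proof -
  have Dz: "\<And>v. \<not> v \<le> u1 \<Longrightarrow> D v = {}" using D unfolding DF_def by blast
  have DF: "\<And>v. D v \<subseteq> F v" using DF_sub[OF D] by blast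
  have eq: "res u1 v (res u2 u1 y) = res u2 v y" if "v \<le> u1" for v using res_comp[OF that u12 y] .
  show ?thesis
  proof
    assume "Dpt_le (u1, D) (u2, principal F res le u2 y)"
    then have h: "\<And>v. D v \<subseteq> Dres u1 (principal F res le u2 y) v" unfolding Dpt_le_def by (auto simp: le_fun_def)
    show "below_principal res le D u1 (res u2 u1 y)" unfolding below_principal_def
    proof (intro allI impI ballI)
      fix v x assume vu: "v \<le> u1" and x: "x \<in> D v"
      then have "x \<in> Dres u1 (principal F res le u2 y) v" using h by blast
      moreover have "v \<le> u2" using vu u12 by (rule order_trans)
      ultimately have "le v x (res u2 v y)" using vu unfolding Dres_def principal_def by auto
      then show "le v x (res u1 v (res u2 u1 y))" using eq vu by simp
    qed
  next
    assume h: "below_principal res le D u1 (res u2 u1 y)"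
    have "D v \<subseteq> Dres u1 (principal F res le u2 y) v" for v
    proof
      fix x assume x: "x \<in> D v"
      then have vu: "v \<le> u1" using Dz by blast
      have "le v x (res u1 v (res u2 u1 y))" using h vu x unfolding below_principal_def by blast
      then show "x \<in> Dres u1 (principal F res le u2 y) v"
        using eq[OF vu] vu u12 x DF unfolding Dres_def principal_def by auto
    qed
    then show "Dpt_le (u1, D) (u2, principal F res le u2 y)" unfolding Dpt_le_def using u12 by (auto simp: le_fun_def)
  qed
qed

lemma c2_c1:
  assumes C2: "\<forall>S. downsheaf F res le S \<longrightarrow> good_join F res le S"
  shows "complete_posheaf F res le"
proof -
  define \<alpha> where "\<alpha> u D = lbnd D u" for u D
  have ex: "\<exists>p\<in>F top. \<forall>w. least_bound F res le D w (res top w p)" if "D \<in> DF F res le u" for D u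
    using C2 that gj_unpack unfolding DF_def by blast
  have lb: "least_bound F res le D w (\<alpha> w D)" if D: "D \<in> DF F res le u" for D u w
  proof -
    obtain p where "\<forall>w. least_bound F res le D w (res top w p)" using ex[OF D] by blast
    then show ?thesis unfolding \<alpha>_def using lbnd_eq by metis
  qed
  have "left_adjoint_to_principal F res le \<alpha>" unfolding left_adjoint_to_principal_def
  proof (intro conjI allI impI)
    fix u D assume "D \<in> DF F res le u"
    then show "\<alpha> u D \<in> F u" using lb unfolding least_bound_def by blast
  next
    fix u v D assume vu: "v \<le> u" and D: "D \<in> DF F res le u"
    obtain p where pF: "p \<in> F top" and lbp: "\<forall>w. least_bound F res le D w (res top w p)" using ex[OF D] by blast
    have 1: "\<alpha> u D = res top u p" unfolding \<alpha>_def using lbnd_eq lbp by metis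
    have 2: "\<alpha> v (Dres v D) = res top v p" unfolding \<alpha>_def using lbnd_eq lbp lb_Dres by metis
    show "res u v (\<alpha> u D) = \<alpha> v (Dres v D)" using 1 2 res_comp[OF vu top_greatest pF] by simp
  next
    fix u D E assume D: "D \<in> DF F res le u" and E: "E \<in> DF F res le u" and DE: "D \<le> E"
    have lE: "least_bound F res le E u (\<alpha> u E)" using lb[OF E] .
    have "below_principal res le D u (\<alpha> u E)"
      using lE DE unfolding least_bound_def below_principal_def le_fun_def by blast
    then show "le u (\<alpha> u D) (\<alpha> u E)" using lb[OF D] lE unfolding least_bound_def by blast
  next
    fix u1 D u2 y assume D: "D \<in> DF F res le u1" and y: "y \<in> F u2"
    show "pt_le res le (u1, \<alpha> u1 D) (u2, y) = Dpt_le (u1, D) (u2, principal F res le u2 y)"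
    proof (cases "u1 \<le> u2")
      case False then show ?thesis unfolding pt_le_def Dpt_le_def by simp
    next
      case True
      have "le u1 (\<alpha> u1 D) (res u2 u1 y) \<longleftrightarrow> below_principal res le D u1 (res u2 u1 y)"
        using lb_iff[OF DF_sub[OF D] lb[OF D] res_in[OF True y]] .
      then show ?thesis using DF_principal[OF D True y] True unfolding pt_le_def by simp
    qed
  qed
  then show ?thesis unfolding complete_posheaf_def by blast
qed

lemma Dres_DF: assumes S: "downsheaf F res le S" shows "Dres u S \<in> DF F res le u"
proof -
  have sub: "subsheaf F res S" and dc: "\<forall>v x y. x \<in> S v \<longrightarrow> y \<in> F v \<longrightarrow> le v y x \<longrightarrow> y \<in> S v"
    using S unfolding downsheaf_def by blast+
  have 1: "\<forall>v. Dres u S v \<subseteq> F v" using sub unfolding subsheaf_def Dres_def by auto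
  have 2: "res v w x \<in> Dres u S w" if "w \<le> v" "x \<in> Dres u S v" for v w x
    using that sub unfolding subsheaf_def Dres_def by (auto split: if_splits)
  have 3: "x \<in> Dres u S (Sup U)" if xF: "x \<in> F (Sup U)" and h: "\<forall>w\<in>U. res (Sup U) w x \<in> Dres u S w" for U x
  proof -
    have Uu: "Sup U \<le> u"
    proof (rule Sup_least)
      fix w assume "w \<in> U" then show "w \<le> u" using h by (auto simp: Dres_def split: if_splits)
    qed
    have "\<forall>w\<in>U. res (Sup U) w x \<in> S w" using h by (auto simp: Dres_def split: if_splits)
    then have "x \<in> S (Sup U)" using sub xF unfolding subsheaf_def by blast
    then show ?thesis using Uu unfolding Dres_def by simp
  qed
  have 4: "y \<in> Dres u S v" if "x \<in> Dres u S v" "y \<in> F v" "le v y x" for v x y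
    using that dc unfolding Dres_def by (auto split: if_splits)
  have "downsheaf F res le (Dres u S)" unfolding downsheaf_def subsheaf_def
    apply (intro conjI)
       apply (rule 1)
      apply (intro allI impI) apply (erule (1) 2)
     apply (intro allI impI) apply (erule 3) apply assumption
    apply (intro allI impI) apply (erule (2) 4)
    done
  moreover have "\<forall>v. \<not> v \<le> u \<longrightarrow> Dres u S v = {}" unfolding Dres_def by simp
  ultimately show ?thesis unfolding DF_def by blast
qed

lemma c1_c2:
  assumes C1: "complete_posheaf F res le" and S: "downsheaf F res le S"
  shows "good_join F res le S"
proof -
  obtain \<alpha> where a: "left_adjoint_to_principal F res le \<alpha>" using C1 unfolding complete_posheaf_def by blast
  note A = a[unfolded left_adjoint_to_principal_def]
  note a1 = A[THEN conjunct1, rule_format]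
  note a2 = A[THEN conjunct2, THEN conjunct1, rule_format]
  note a4 = A[THEN conjunct2, THEN conjunct2, THEN conjunct2, rule_format]
  have lbE: "least_bound F res le E u (\<alpha> u E)" if E: "E \<in> DF F res le u" for E u
  proof -
    have zF: "\<alpha> u E \<in> F u" using a1[OF E] .
    have "pt_le res le (u, \<alpha> u E) (u, \<alpha> u E)" unfolding pt_le_def using prefl[OF zF] res_id[OF zF] by simp
    then have "below_principal res le E u (res u u (\<alpha> u E))" using a4[OF E zF] DF_principal[OF E order_refl zF] by simp
    then have bp: "below_principal res le E u (\<alpha> u E)" using res_id[OF zF] by simp
    have "le u (\<alpha> u E) z'" if z': "z' \<in> F u" and bz: "below_principal res le E u z'" for z'
    proof -
      have "Dpt_le (u, E) (u, principal F res le u z')" using DF_principal[OF E order_refl z'] bz res_id[OF z'] by simp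
      then have "pt_le res le (u, \<alpha> u E) (u, z')" using a4[OF E z'] by simp
      then show ?thesis unfolding pt_le_def using res_id[OF z'] by simp
    qed
    then show ?thesis unfolding least_bound_def using zF bp by blast
  qed
  have ST: "S \<in> DF F res le top" unfolding DF_def using S by simp
  define p where "p = \<alpha> top S"
  have pF: "p \<in> F top" using a1[OF ST] p_def by simp
  have "least_bound F res le S u (res top u p)" for u
  proof -
    have "res top u p = \<alpha> u (Dres u S)" using a2[OF top_greatest ST] p_def by simp
    then show ?thesis using lbE[OF Dres_DF[OF S]] lb_Dres by simp
  qed
  moreover have "\<forall>v. S v \<subseteq> F v" using S unfolding downsheaf_def subsheaf_def by blast
  ultimately show ?thesis using GJ pF by blast
qed
end

theorem proposition3p2:
  fixes F :: "'o::complete_lattice \<Rightarrow> 'a set"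
    and res :: "'o \<Rightarrow> 'o \<Rightarrow> 'a \<Rightarrow> 'a"
    and le :: "'o \<Rightarrow> 'a \<Rightarrow> 'a \<Rightarrow> bool"
  assumes frame: "frame_law TYPE('o)"
    and pos: "posheaf F res le"
  defines "C1 \<equiv> complete_posheaf F res le"
    and "C2 \<equiv> (\<forall>S. downsheaf F res le S \<longrightarrow> good_join F res le S)"
    and "C3 \<equiv> (\<forall>S. subsheaf F res S \<longrightarrow> good_join F res le S)"
    and "C4 \<equiv> (\<forall>u. complete_lattice_on (F u) (le u)) \<and>
              (\<forall>u v. v \<le> u \<longrightarrow>
                 res u v ` F u = F v \<and>
                 (\<exists>l. galois_adj (F v) (le v) (F u) (le u) l (res u v)) \<and>
                 (\<exists>g. galois_adj (F u) (le u) (F v) (le v) (res u v) g))"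
  shows "(C1 \<longleftrightarrow> C2) \<and> (C2 \<longleftrightarrow> C3) \<and> (C3 \<longleftrightarrow> C4)"
proof -
  interpret PS F res le by (rule PS.intro[OF pos])
  have 12: "C1 \<Longrightarrow> C2" unfolding C1_def C2_def apply (intro allI impI) apply (erule (1) c1_c2) done
  have 21: "C2 \<Longrightarrow> C1" unfolding C1_def C2_def by (rule c2_c1)
  have 24: "C2 \<Longrightarrow> C4" unfolding C2_def C4_def by (rule c2_c4[OF frame])
  have 43: "C4 \<Longrightarrow> C3" unfolding C3_def C4_def
    apply (intro allI impI) apply (erule conjE) apply (erule (2) c4_c3) done
  have 32: "C3 \<Longrightarrow> C2" unfolding C3_def C2_def downsheaf_def by simp
  show ?thesis using 12 21 24 43 32 by blast
qed

end
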